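(* Let $G\le\mathrm{Aut}(\mathcal{T}_d)$ be a persistent, finite-state self-similar group. If the Röver–Nekrashevych group $V_d(G)$ is finitely generated, then so is $G$.
   Context: Let $X=\{1,\dots,d\}$ ($d\ge2$) with its usual order; $X^*$ is the vertex set of the rooted $d$-ary tree $\mathcal{T}_d$, ordered lexicographically. Every $f\in\mathrm{Aut}(\mathcal{T}_d)$ has a wreath recursion $f=\rho(f)(f_1,\dots,f_d)$ with $\rho(f)\in S_d$, $f_i$ determined by $f(iw)=\rho(f)(i)f_i(w)$; the states of $f$ form the smallest set containing $f$ and closed under $f\mapsto f_i$. $G$ is self-similar if it contains all states of its elements; finite-state if each element has finitely many states; persistent if there is $i$ such that $g_i=g$ for every $g\in G$. With $X^\omega$ the infinite words, for finite complete rooted subtrees $T_-,T_+$ with $n$ leaves $u_1,\dots,u_n$, $v_1,\dots,v_n$ (lexicographic order), $\sigma\in S_n$, $g_i\in G$, $[T_-,\sigma(g_1,\dots,g_n),T_+]$ is the homeomorphism of $X^\omega$ with $v_iw\mapsto u_{\sigma(i)}g_i(w)$; $V_d(G)$ is the group of all these. *)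

theory Defs
  imports "HOL-Algebra.Bij" "HOL-Algebra.Generated_Groups"
begin

text \<open>Alphabet X = {0..<d} (order-isomorphic to {1..d}); finite words are lists over X.\<close>

definition fwords :: "nat \<Rightarrow> nat list set" where
  "fwords d = {u. set u \<subseteq> {..<d}}"

definition iwords :: "nat \<Rightarrow> (nat \<Rightarrow> nat) set" where
  "iwords d = {w. \<forall>k. w k < d}"

definition tree_aut :: "nat \<Rightarrow> (nat list \<Rightarrow> nat list) \<Rightarrow> bool" where
  "tree_aut d f \<longleftrightarrow> f \<in> Bij (fwords d) \<and>
     (\<forall>u\<in>fwords d. length (f u) = length u) \<and>
     (\<forall>u\<in>fwords d. \<forall>v\<in>fwords d. take (length u) (f (u @ v)) = f u)"

text \<open>The state (section) f_i of f at letter i: f(iw) = rho(f)(i) f_i(w).\<close>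
definition section1 :: "nat \<Rightarrow> (nat list \<Rightarrow> nat list) \<Rightarrow> nat \<Rightarrow> (nat list \<Rightarrow> nat list)" where
  "section1 d f i = (\<lambda>w \<in> fwords d. tl (f (i # w)))"

inductive_set states :: "nat \<Rightarrow> (nat list \<Rightarrow> nat list) \<Rightarrow> (nat list \<Rightarrow> nat list) set"
  for d f where
    self: "f \<in> states d f"
  | step: "h \<in> states d f \<Longrightarrow> i < d \<Longrightarrow> section1 d h i \<in> states d f"

definition self_similar :: "nat \<Rightarrow> (nat list \<Rightarrow> nat list) set \<Rightarrow> bool" where
  "self_similar d G \<longleftrightarrow> (\<forall>g\<in>G. states d g \<subseteq> G)"

definition finite_state :: "nat \<Rightarrow> (nat list \<Rightarrow> nat list) set \<Rightarrow> bool" where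
  "finite_state d G \<longleftrightarrow> (\<forall>g\<in>G. finite (states d g))"

definition persistent :: "nat \<Rightarrow> (nat list \<Rightarrow> nat list) set \<Rightarrow> bool" where
  "persistent d G \<longleftrightarrow> (\<exists>i<d. \<forall>g\<in>G. section1 d g i = g)"

definition iact :: "(nat list \<Rightarrow> nat list) \<Rightarrow> (nat \<Rightarrow> nat) \<Rightarrow> (nat \<Rightarrow> nat)" where
  "iact g w = (\<lambda>k. g (map w [0..<Suc k]) ! k)"

definition conc :: "nat list \<Rightarrow> (nat \<Rightarrow> nat) \<Rightarrow> (nat \<Rightarrow> nat)" where
  "conc u w = (\<lambda>k. if k < length u then u ! k else w (k - length u))"

definition complete_subtree :: "nat \<Rightarrow> nat list set \<Rightarrow> bool" where
  "complete_subtree d T \<longleftrightarrow> finite T \<and> T \<subseteq> fwords d \<and> [] \<in> T \<and>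
     (\<forall>u v. u @ v \<in> T \<longrightarrow> u \<in> T) \<and>
     (\<forall>u\<in>T. (\<forall>i<d. u @ [i] \<in> T) \<or> (\<forall>i<d. u @ [i] \<notin> T))"

definition leaves :: "nat \<Rightarrow> nat list set \<Rightarrow> nat list set" where
  "leaves d T = {u \<in> T. \<forall>i<d. u @ [i] \<notin> T}"

definition lexless :: "nat list \<Rightarrow> nat list \<Rightarrow> bool" where
  "lexless u v \<longleftrightarrow> (u, v) \<in> lexord {(x, y). x < y}"

definition leaf_list :: "nat \<Rightarrow> nat list set \<Rightarrow> nat list list" where
  "leaf_list d T = (THE L. set L = leaves d T \<and> sorted_wrt lexless L)"

text \<open>f = [T-, sigma(g_1..g_n), T+] (indices 0-based): v_i w \<mapsto> u_sigma(i) g_i(w).\<close>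
definition is_V_elem :: "nat \<Rightarrow> (nat list \<Rightarrow> nat list) set \<Rightarrow> ((nat \<Rightarrow> nat) \<Rightarrow> (nat \<Rightarrow> nat)) \<Rightarrow> bool" where
  "is_V_elem d G f \<longleftrightarrow>
     (\<exists>Tm Tp \<sigma> gs. complete_subtree d Tm \<and> complete_subtree d Tp \<and>
        length (leaf_list d Tm) = length (leaf_list d Tp) \<and>
        bij_betw \<sigma> {..<length (leaf_list d Tp)} {..<length (leaf_list d Tp)} \<and>
        (\<forall>i<length (leaf_list d Tp). gs i \<in> G) \<and>
        f \<in> extensional (iwords d) \<and>
        (\<forall>i<length (leaf_list d Tp). \<forall>w\<in>iwords d.
            f (conc (leaf_list d Tp ! i) w) = conc (leaf_list d Tm ! \<sigma> i) (iact (gs i) w)))"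

definition Vgroup :: "nat \<Rightarrow> (nat list \<Rightarrow> nat list) set \<Rightarrow> ((nat \<Rightarrow> nat) \<Rightarrow> (nat \<Rightarrow> nat)) set" where
  "Vgroup d G = {f. is_V_elem d G f}"

definition fin_gen :: "'a set \<Rightarrow> ('a \<Rightarrow> 'a) set \<Rightarrow> bool" where
  "fin_gen A H \<longleftrightarrow> (\<exists>S. finite S \<and> S \<subseteq> H \<and> generate (BijGroup A) S = H)"

end

theory Submission
  imports Defs "HOL-Library.List_Lexorder"
begin

definition pref :: "(nat \<Rightarrow> nat) \<Rightarrow> nat \<Rightarrow> nat list" where "pref w n = map w [0..<n]"
definition sh :: "nat \<Rightarrow> (nat \<Rightarrow> nat) \<Rightarrow> (nat \<Rightarrow> nat)" where "sh n w = (\<lambda>k. w (k + n))"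
definition secw :: "nat \<Rightarrow> (nat list \<Rightarrow> nat list) \<Rightarrow> nat list \<Rightarrow> (nat list \<Rightarrow> nat list)" where
  "secw d g u = (\<lambda>v\<in>fwords d. drop (length u) (g (u @ v)))"

lemma fwords_append[simp]: "u @ v \<in> fwords d \<longleftrightarrow> u \<in> fwords d \<and> v \<in> fwords d"
  by (auto simp: fwords_def)
lemma fwords_Cons[simp]: "i # v \<in> fwords d \<longleftrightarrow> i < d \<and> v \<in> fwords d"
  by (auto simp: fwords_def)
lemma fwords_Nil[simp]: "[] \<in> fwords d"
  by (auto simp: fwords_def)
lemma fwords_drop: "u \<in> fwords d \<Longrightarrow> drop n u \<in> fwords d"
  by (auto simp: fwords_def dest: in_set_dropD)
lemma fwords_take: "u \<in> fwords d \<Longrightarrow> take n u \<in> fwords d"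
  by (auto simp: fwords_def dest: in_set_takeD)
lemma fwords_nth: "u \<in> fwords d \<Longrightarrow> k < length u \<Longrightarrow> u ! k < d"
  unfolding fwords_def using nth_mem by blast
lemma pref_length[simp]: "length (pref w n) = n"
  by (simp add: pref_def)
lemma pref_nth[simp]: "k < n \<Longrightarrow> pref w n ! k = w k"
  by (simp add: pref_def)
lemma pref_fwords: "w \<in> iwords d \<Longrightarrow> pref w n \<in> fwords d"
  by (auto simp: pref_def fwords_def iwords_def)
lemma sh_iwords: "w \<in> iwords d \<Longrightarrow> sh n w \<in> iwords d"
  by (auto simp: sh_def iwords_def)
lemma pref_add: "pref w (n + m) = pref w n @ pref (sh n w) m"
  by (rule nth_equalityI) (auto simp: nth_append sh_def)
lemma conc_pref_sh: "conc (pref w n) (sh n w) = w"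
  by (auto simp: conc_def sh_def)
lemma conc_append: "conc (u @ v) z = conc u (conc v z)"
  unfolding conc_def by (rule ext) (auto simp: nth_append)
lemma conc_Nil[simp]: "conc [] z = z"
  by (auto simp: conc_def)
lemma conc_iwords: "u \<in> fwords d \<Longrightarrow> z \<in> iwords d \<Longrightarrow> conc u z \<in> iwords d"
  using fwords_nth by (auto simp: conc_def iwords_def)
lemma pref_conc: "pref (conc u z) (length u + m) = u @ pref z m"
  by (rule nth_equalityI) (auto simp: nth_append conc_def)
lemma pref_conc_le: "n \<le> length u \<Longrightarrow> pref (conc u z) n = take n u"
  by (rule nth_equalityI) (auto simp: conc_def)
lemma pref_conc_self: "pref (conc u z) (length u) = u"
  by (simp add: pref_conc_le)
lemma sh_conc: "sh (length u) (conc u z) = z"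
  by (auto simp: conc_def sh_def)
lemma conc_inj: "conc u x = conc u y \<Longrightarrow> x = y"
  by (metis sh_conc)

lemma ta_fw: "tree_aut d g \<Longrightarrow> u \<in> fwords d \<Longrightarrow> g u \<in> fwords d"
  by (auto simp: tree_aut_def Bij_def bij_betw_def)
lemma ta_len: "tree_aut d g \<Longrightarrow> u \<in> fwords d \<Longrightarrow> length (g u) = length u"
  by (auto simp: tree_aut_def)
lemma ta_take: "tree_aut d g \<Longrightarrow> u \<in> fwords d \<Longrightarrow> v \<in> fwords d \<Longrightarrow> take (length u) (g (u @ v)) = g u"
  by (auto simp: tree_aut_def)
lemma ta_ext: "tree_aut d g \<Longrightarrow> g \<in> extensional (fwords d)"
  by (auto simp: tree_aut_def Bij_def)
lemma ta_app: "tree_aut d g \<Longrightarrow> u \<in> fwords d \<Longrightarrow> v \<in> fwords d \<Longrightarrow> g (u @ v) = g u @ secw d g u v"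
proof -
  assume a: "tree_aut d g" "u \<in> fwords d" "v \<in> fwords d"
  have "g (u @ v) = take (length u) (g (u @ v)) @ drop (length u) (g (u @ v))" by simp
  also have "\<dots> = g u @ secw d g u v" using ta_take[OF a] a by (simp add: secw_def)
  finally show ?thesis .
qed
lemma secw_fw: "tree_aut d g \<Longrightarrow> u \<in> fwords d \<Longrightarrow> v \<in> fwords d \<Longrightarrow> secw d g u v \<in> fwords d"
  by (simp add: secw_def fwords_drop ta_fw)
lemma secw_len: "tree_aut d g \<Longrightarrow> u \<in> fwords d \<Longrightarrow> v \<in> fwords d \<Longrightarrow> length (secw d g u v) = length v"
  by (simp add: secw_def ta_len)
lemma secw_Nil: "g \<in> extensional (fwords d) \<Longrightarrow> secw d g [] = g"
  by (auto simp: secw_def extensional_def)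
lemma secw_snoc: "u \<in> fwords d \<Longrightarrow> i < d \<Longrightarrow> secw d g (u @ [i]) = section1 d (secw d g u) i"
  by (rule ext) (auto simp: secw_def section1_def drop_Suc tl_drop)
lemma secw_states: "u \<in> fwords d \<Longrightarrow> g \<in> extensional (fwords d) \<Longrightarrow> secw d g u \<in> states d g"
proof (induction u rule: rev_induct)
  case Nil then show ?case by (simp add: secw_Nil states.self)
next
  case (snoc i u) then show ?case by (simp add: secw_snoc states.step)
qed

lemma iact_iwords: "tree_aut d g \<Longrightarrow> w \<in> iwords d \<Longrightarrow> iact g w \<in> iwords d"
proof -
  assume g: "tree_aut d g" and w: "w \<in> iwords d"
  have "g (pref w (Suc k)) ! k < d" for k
    using ta_fw[OF g pref_fwords[OF w]] ta_len[OF g pref_fwords[OF w]] by (simp add: fwords_nth)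
  then show ?thesis by (simp add: iact_def iwords_def pref_def)
qed

lemma pref_iact: "tree_aut d g \<Longrightarrow> w \<in> iwords d \<Longrightarrow> pref (iact g w) n = g (pref w n)"
proof (rule nth_equalityI)
  assume g: "tree_aut d g" and w: "w \<in> iwords d"
  show "length (pref (iact g w) n) = length (g (pref w n))" using ta_len[OF g pref_fwords[OF w]] by simp
  fix k assume "k < length (pref (iact g w) n)"
  then have k: "k < n" by simp
  have "pref w n = pref w (Suc k) @ pref (sh (Suc k) w) (n - Suc k)"
    using pref_add[of w "Suc k" "n - Suc k"] k by simp
  then have "take (Suc k) (g (pref w n)) = g (pref w (Suc k))"
    using ta_take[OF g pref_fwords[OF w] pref_fwords[OF sh_iwords[OF w]], of "Suc k" "Suc k" "n - Suc k"] by simp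
  then have "g (pref w n) ! k = g (pref w (Suc k)) ! k"
    by (metis k lessI nth_take)
  then show "pref (iact g w) n ! k = g (pref w n) ! k"
    using k by (simp add: iact_def pref_def)
qed

lemma iact_nth: "iact g w k = g (pref w (Suc k)) ! k"
  by (simp add: iact_def pref_def)

lemma iact_conc:
  assumes g: "tree_aut d g" and v: "v \<in> fwords d" and z: "z \<in> iwords d"
  shows "iact g (conc v z) = conc (g v) (iact (secw d g v) z)"
proof (rule ext)
  fix k
  show "iact g (conc v z) k = conc (g v) (iact (secw d g v) z) k"
  proof (cases "k < length v")
    case True
    have p: "pref (conc v z) (Suc k) = take (Suc k) v" using True by (simp add: pref_conc_le)
    have "take (Suc k) (g v) = g (take (Suc k) v)"
      using ta_take[OF g fwords_take[OF v] fwords_drop[OF v], of "Suc k" "Suc k"] True by simp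
    then have "g (take (Suc k) v) ! k = g v ! k" by (metis lessI nth_take)
    then show ?thesis using True p ta_len[OF g v] by (simp add: iact_nth conc_def)
  next
    case False
    define m where "m = k - length v"
    have k: "Suc k = length v + Suc m" using False m_def by simp
    have p: "pref (conc v z) (Suc k) = v @ pref z (Suc m)" using k pref_conc by metis
    have "g (v @ pref z (Suc m)) = g v @ secw d g v (pref z (Suc m))"
      using ta_app[OF g v pref_fwords[OF z]] .
    then have "g (pref (conc v z) (Suc k)) ! k = secw d g v (pref z (Suc m)) ! m"
      using p ta_len[OF g v] False m_def by (simp add: nth_append)
    then show ?thesis using False ta_len[OF g v] m_def by (simp add: iact_nth conc_def)
  qed
qed

lemma iact_compose:
  assumes g: "tree_aut d g" and h: "tree_aut d h" and w: "w \<in> iwords d"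
  shows "iact (compose (fwords d) g h) w = iact g (iact h w)"
proof (rule ext)
  fix k
  show "iact (compose (fwords d) g h) w k = iact g (iact h w) k"
    using pref_iact[OF h w, of "Suc k"] pref_fwords[OF w, of "Suc k"]
    by (simp add: iact_nth compose_def)
qed

lemma iact_id: "w \<in> iwords d \<Longrightarrow> iact (\<lambda>x\<in>fwords d. x) w = w"
  by (rule ext) (simp add: iact_nth pref_fwords)

locale setting =
  fixes d :: nat and G :: "(nat list \<Rightarrow> nat list) set"
  assumes d2: "d \<ge> 2"
    and sub: "subgroup G (BijGroup (fwords d))"
    and taG: "\<forall>g\<in>G. tree_aut d g"
    and ss: "self_similar d G"
begin

abbreviation "BG \<equiv> BijGroup (fwords d)"

lemma grp: "group BG" by (rule group_BijGroup)

lemma G_carr: "G \<subseteq> Bij (fwords d)"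
  using subgroup.subset[OF sub] by (simp add: BijGroup_def)

lemma G_ta: "g \<in> G \<Longrightarrow> tree_aut d g" using taG by blast

lemma G_ext: "g \<in> G \<Longrightarrow> g \<in> extensional (fwords d)" using G_ta ta_ext by blast

lemma mult_BG: "a \<in> Bij (fwords d) \<Longrightarrow> b \<in> Bij (fwords d) \<Longrightarrow> a \<otimes>\<^bsub>BG\<^esub> b = compose (fwords d) a b"
  by (simp add: BijGroup_def)

lemma one_BG: "\<one>\<^bsub>BG\<^esub> = (\<lambda>x\<in>fwords d. x)"
  by (simp add: BijGroup_def)

lemma G_carrBG: "g \<in> G \<Longrightarrow> g \<in> carrier BG" using subgroup.mem_carrier[OF sub] .

lemma G_one: "\<one>\<^bsub>BG\<^esub> \<in> G" using subgroup.one_closed[OF sub] .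
lemma G_inv: "g \<in> G \<Longrightarrow> inv\<^bsub>BG\<^esub> g \<in> G" using subgroup.m_inv_closed[OF sub] .
lemma G_mult: "g \<in> G \<Longrightarrow> h \<in> G \<Longrightarrow> g \<otimes>\<^bsub>BG\<^esub> h \<in> G" using subgroup.m_closed[OF sub] .

lemma secw_G: "g \<in> G \<Longrightarrow> u \<in> fwords d \<Longrightarrow> secw d g u \<in> G"
  using secw_states[OF _ G_ext] ss unfolding self_similar_def by blast

lemma sec1_G: "g \<in> G \<Longrightarrow> i < d \<Longrightarrow> section1 d g i \<in> G"
  using states.step[OF states.self] ss unfolding self_similar_def by blast

lemma secw_single: "g \<in> G \<Longrightarrow> i < d \<Longrightarrow> secw d g [i] = section1 d g i"
  using secw_snoc[of "[]" d i g] secw_Nil[OF G_ext] by simp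

lemma iact_inv1: "g \<in> G \<Longrightarrow> w \<in> iwords d \<Longrightarrow> iact (inv\<^bsub>BG\<^esub> g) (iact g w) = w"
proof -
  assume g: "g \<in> G" and w: "w \<in> iwords d"
  have "iact (inv\<^bsub>BG\<^esub> g) (iact g w) = iact (inv\<^bsub>BG\<^esub> g \<otimes>\<^bsub>BG\<^esub> g) w"
    using iact_compose[OF G_ta[OF G_inv[OF g]] G_ta[OF g] w] mult_BG[OF subsetD[OF G_carr G_inv[OF g]] subsetD[OF G_carr g]] by simp
  also have "inv\<^bsub>BG\<^esub> g \<otimes>\<^bsub>BG\<^esub> g = \<one>\<^bsub>BG\<^esub>"
    by (rule group.l_inv[OF grp G_carrBG[OF g]])
  finally show ?thesis using iact_id[OF w] one_BG by (simp add: restrict_def)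
qed

lemma iact_inv2: "g \<in> G \<Longrightarrow> w \<in> iwords d \<Longrightarrow> iact g (iact (inv\<^bsub>BG\<^esub> g) w) = w"
proof -
  assume g: "g \<in> G" and w: "w \<in> iwords d"
  have "iact g (iact (inv\<^bsub>BG\<^esub> g) w) = iact (g \<otimes>\<^bsub>BG\<^esub> inv\<^bsub>BG\<^esub> g) w"
    using iact_compose[OF G_ta[OF g] G_ta[OF G_inv[OF g]] w] mult_BG[OF subsetD[OF G_carr g] subsetD[OF G_carr G_inv[OF g]]] by simp
  also have "g \<otimes>\<^bsub>BG\<^esub> inv\<^bsub>BG\<^esub> g = \<one>\<^bsub>BG\<^esub>"
    by (rule group.r_inv[OF grp G_carrBG[OF g]])
  finally show ?thesis using iact_id[OF w] one_BG by (simp add: restrict_def)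
qed

lemma first_letter:
  assumes b: "b \<in> G" and i: "i < d"
  obtains j where "j < d" "b [i] = [j]"
proof -
  have "b [i] \<in> fwords d" "length (b [i]) = 1"
    using ta_fw[OF G_ta[OF b]] ta_len[OF G_ta[OF b]] i by auto
  then show ?thesis using that
    by (cases "b [i]") (auto simp: fwords_def)
qed

lemma sec1_mult:
  assumes a: "a \<in> G" and b: "b \<in> G" and i: "i < d" and j: "b [i] = [j]" "j < d"
  shows "section1 d (a \<otimes>\<^bsub>BG\<^esub> b) i = section1 d a j \<otimes>\<^bsub>BG\<^esub> section1 d b i"
proof -
  have ab: "a \<otimes>\<^bsub>BG\<^esub> b = compose (fwords d) a b" using mult_BG[OF subsetD[OF G_carr a] subsetD[OF G_carr b]] .
  have ab2: "section1 d a j \<otimes>\<^bsub>BG\<^esub> section1 d b i = compose (fwords d) (section1 d a j) (section1 d b i)"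
    using mult_BG[OF subsetD[OF G_carr sec1_G[OF a j(2)]] subsetD[OF G_carr sec1_G[OF b i]]] .
  show ?thesis
  proof (rule ext)
    fix w
    show "section1 d (a \<otimes>\<^bsub>BG\<^esub> b) i w = (section1 d a j \<otimes>\<^bsub>BG\<^esub> section1 d b i) w"
    proof (cases "w \<in> fwords d")
      case False then show ?thesis unfolding ab ab2 by (simp add: section1_def compose_def)
    next
      case True
      have s: "section1 d b i w \<in> fwords d"
        using G_ta[OF sec1_G[OF b i]] True ta_fw by blast
      have eq1: "b (i # w) = [j] @ section1 d b i w"
        using ta_app[OF G_ta[OF b], of "[i]" w] True i j secw_single[OF b i] by simp
      have eq2: "a ([j] @ section1 d b i w) = a [j] @ section1 d a j (section1 d b i w)"
        using ta_app[OF G_ta[OF a], of "[j]" "section1 d b i w"] s j secw_single[OF a j(2)] by simp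
      have len: "length (a [j]) = 1" using ta_len[OF G_ta[OF a], of "[j]"] j by simp
      have L: "section1 d (compose (fwords d) a b) i w = tl (a (b (i # w)))"
        using True i by (simp add: section1_def compose_def)
      have R: "compose (fwords d) (section1 d a j) (section1 d b i) w = section1 d a j (section1 d b i w)"
        using True by (simp add: compose_def)
      have "tl (a (b (i # w))) = tl (a [j] @ section1 d a j (section1 d b i w))"
        using eq1 eq2 by simp
      also have "\<dots> = section1 d a j (section1 d b i w)"
        using len by (cases "a [j]") auto
      finally show ?thesis unfolding ab ab2 L R .
    qed
  qed
qed

lemma sec1_one: "i < d \<Longrightarrow> section1 d \<one>\<^bsub>BG\<^esub> i = \<one>\<^bsub>BG\<^esub>"
  by (rule ext) (simp add: one_BG section1_def)

lemma sec1_inv: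
  assumes g: "g \<in> G" and i: "i < d"
  obtains j where "j < d" "section1 d (inv\<^bsub>BG\<^esub> g) i = inv\<^bsub>BG\<^esub> (section1 d g j)"
proof -
  obtain j where j: "j < d" "(inv\<^bsub>BG\<^esub> g) [i] = [j]" using first_letter[OF G_inv[OF g] i] by blast
  have "section1 d g j \<otimes>\<^bsub>BG\<^esub> section1 d (inv\<^bsub>BG\<^esub> g) i = section1 d (g \<otimes>\<^bsub>BG\<^esub> inv\<^bsub>BG\<^esub> g) i"
    using sec1_mult[OF g G_inv[OF g] i j(2) j(1)] by simp
  also have "\<dots> = \<one>\<^bsub>BG\<^esub>"
    using group.r_inv[OF grp G_carrBG[OF g]] sec1_one[OF i] by simp
  finally have e: "section1 d g j \<otimes>\<^bsub>BG\<^esub> section1 d (inv\<^bsub>BG\<^esub> g) i = \<one>\<^bsub>BG\<^esub>" .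
  have c1: "section1 d g j \<in> carrier BG" using G_carrBG[OF sec1_G[OF g j(1)]] .
  have c2: "section1 d (inv\<^bsub>BG\<^esub> g) i \<in> carrier BG" using G_carrBG[OF sec1_G[OF G_inv[OF g] i]] .
  have "inv\<^bsub>BG\<^esub> (section1 d g j) = section1 d (inv\<^bsub>BG\<^esub> g) i"
    using group.inv_equality[OF grp group.inv_comm[OF grp e c1 c2] c1 c2] .
  then show ?thesis using that j by metis
qed

lemma KG: "F \<subseteq> G \<Longrightarrow> generate BG F \<subseteq> G"
  using group.generate_subgroup_incl[OF grp _ sub] by blast

lemma K_sub: "F \<subseteq> G \<Longrightarrow> subgroup (generate BG F) BG"
  using group.generate_is_subgroup[OF grp] G_carr by (simp add: BijGroup_def)

lemma K_sec1:
  assumes F: "F \<subseteq> G" "\<forall>t\<in>F. \<forall>i<d. section1 d t i \<in> F"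
  shows "k \<in> generate BG F \<Longrightarrow> i < d \<Longrightarrow> section1 d k i \<in> generate BG F"
proof (induction k arbitrary: i rule: generate.induct)
  case one
  then show ?case using sec1_one generate.one by metis
next
  case (incl h)
  then have "section1 d h i \<in> F" using F(2) by blast
  then show ?case by (rule generate.incl)
next
  case (inv h)
  have hG: "h \<in> G" using inv F by blast
  obtain j where j: "j < d" "section1 d (inv\<^bsub>BG\<^esub> h) i = inv\<^bsub>BG\<^esub> (section1 d h j)"
    using sec1_inv[OF hG inv(2)] by blast
  have "section1 d h j \<in> F" using F(2) inv j by blast
  then show ?case unfolding j(2) by (rule generate.inv)
next
  case (eng h1 h2)
  have G1: "h1 \<in> G" and G2: "h2 \<in> G" using eng KG[OF F(1)] by blast+
  obtain j where j: "j < d" "h2 [i] = [j]" using first_letter[OF G2 eng(5)] by blast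
  have "section1 d h1 j \<in> generate BG F" "section1 d h2 i \<in> generate BG F" using eng j by blast+
  then show ?case unfolding sec1_mult[OF G1 G2 eng(5) j(2) j(1)] by (rule generate.eng)
qed

lemma K_secw:
  assumes F: "F \<subseteq> G" "\<forall>t\<in>F. \<forall>i<d. section1 d t i \<in> F"
  shows "k \<in> generate BG F \<Longrightarrow> u \<in> fwords d \<Longrightarrow> secw d k u \<in> generate BG F"
proof (induction u rule: rev_induct)
  case Nil
  then show ?case using secw_Nil G_ext KG[OF F(1)] by (metis subsetD)
next
  case (snoc i u)
  then show ?case using secw_snoc[of u d i k] K_sec1[OF F] by simp
qed

lemma refine:
  assumes h: "h \<in> G" and v: "v \<in> fwords d"
    and f: "\<forall>z\<in>iwords d. f (conc p z) = conc u (iact h z)" and z: "z \<in> iwords d"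
  shows "f (conc (p @ v) z) = conc (u @ h v) (iact (secw d h v) z)"
proof -
  have "f (conc (p @ v) z) = f (conc p (conc v z))" by (simp add: conc_append)
  also have "\<dots> = conc u (iact h (conc v z))" using f conc_iwords[OF v z] by blast
  also have "\<dots> = conc (u @ h v) (iact (secw d h v) z)"
    using iact_conc[OF G_ta[OF h] v z] by (simp add: conc_append)
  finally show ?thesis .
qed

end

definition loc :: "nat \<Rightarrow> (nat list \<Rightarrow> nat list) set \<Rightarrow> ((nat \<Rightarrow> nat) \<Rightarrow> (nat \<Rightarrow> nat)) \<Rightarrow> bool" where
  "loc d H f \<longleftrightarrow> (\<forall>w\<in>iwords d. \<exists>n u h. h \<in> H \<and> u \<in> fwords d \<and>
      (\<forall>z\<in>iwords d. f (conc (pref w n) z) = conc u (iact h z)))"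

locale setH = setting +
  fixes H
  assumes HG: "H \<subseteq> G" and Hsub: "subgroup H BG"
    and Hsec: "\<forall>h\<in>H. \<forall>u\<in>fwords d. secw d h u \<in> H"
begin

abbreviation "BI \<equiv> BijGroup (iwords d)"

lemma loc_compose:
  assumes f1: "f1 \<in> Bij (iwords d)" "loc d H f1" and f2: "f2 \<in> Bij (iwords d)" "loc d H f2"
  shows "loc d H (compose (iwords d) f1 f2)"
  unfolding loc_def
proof
  fix w assume w: "w \<in> iwords d"
  obtain n2 u2 h2 where h2: "h2 \<in> H" "u2 \<in> fwords d"
    and e2: "\<forall>z\<in>iwords d. f2 (conc (pref w n2) z) = conc u2 (iact h2 z)"
    using f2(2) w unfolding loc_def by blast
  define y where "y = f2 w"
  have y: "y \<in> iwords d" using f2(1) w Bij_imp_funcset unfolding y_def by blast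
  obtain n1 u1 h1 where h1: "h1 \<in> H" "u1 \<in> fwords d"
    and e1: "\<forall>z\<in>iwords d. f1 (conc (pref y n1) z) = conc u1 (iact h1 z)"
    using f1(2) y unfolding loc_def by blast
  define v2 where "v2 = pref (sh n2 w) n1"
  have v2: "v2 \<in> fwords d" unfolding v2_def by (rule pref_fwords[OF sh_iwords[OF w]])
  have h2G: "h2 \<in> G" using h2 HG by blast
  have h1G: "h1 \<in> G" using h1 HG by blast
  define U where "U = u2 @ h2 v2"
  define H2 where "H2 = secw d h2 v2"
  have H2: "H2 \<in> H" using Hsec h2 v2 unfolding H2_def by blast
  have A: "\<forall>z\<in>iwords d. f2 (conc (pref w (n2 + n1)) z) = conc U (iact H2 z)"
    using refine[OF h2G v2 e2] unfolding U_def H2_def v2_def pref_add by blast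
  have yU: "y = conc U (iact H2 (sh (n2 + n1) w))"
    using A sh_iwords[OF w] conc_pref_sh[of w "n2 + n1"] unfolding y_def by metis
  have lenU: "length U = length u2 + n1"
    unfolding U_def v2_def using ta_len[OF G_ta[OF h2G] pref_fwords[OF sh_iwords[OF w]]] by simp
  have U: "U \<in> fwords d" unfolding U_def using h2 ta_fw[OF G_ta[OF h2G] v2] by simp
  define r where "r = drop n1 U"
  have pr: "pref y n1 = take n1 U" using yU lenU by (simp add: pref_conc_le)
  have Ur: "U = pref y n1 @ r" unfolding pr r_def by simp
  have r: "r \<in> fwords d" unfolding r_def using U by (rule fwords_drop)
  have B: "\<forall>z\<in>iwords d. f1 (conc U z) = conc (u1 @ h1 r) (iact (secw d h1 r) z)"
    using refine[OF h1G r e1] Ur by metis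
  define h' where "h' = secw d h1 r \<otimes>\<^bsub>BG\<^esub> H2"
  have h'H: "h' \<in> H" unfolding h'_def using subgroup.m_closed[OF Hsub] Hsec h1 r H2 by blast
  have S1: "secw d h1 r \<in> G" using secw_G[OF h1G r] .
  have H2G: "H2 \<in> G" using H2 HG by blast
  have u': "u1 @ h1 r \<in> fwords d" using h1 ta_fw[OF G_ta[OF h1G] r] by simp
  have "\<forall>z\<in>iwords d. compose (iwords d) f1 f2 (conc (pref w (n2 + n1)) z) = conc (u1 @ h1 r) (iact h' z)"
  proof
    fix z assume z: "z \<in> iwords d"
    have cz: "conc (pref w (n2 + n1)) z \<in> iwords d" using conc_iwords[OF pref_fwords[OF w] z] .
    have iz: "iact H2 z \<in> iwords d" using iact_iwords[OF G_ta[OF H2G] z] .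
    have "compose (iwords d) f1 f2 (conc (pref w (n2 + n1)) z) = f1 (conc U (iact H2 z))"
      using cz A z by (simp add: compose_def)
    also have "\<dots> = conc (u1 @ h1 r) (iact (secw d h1 r) (iact H2 z))" using B iz by blast
    also have "iact (secw d h1 r) (iact H2 z) = iact h' z"
      unfolding h'_def mult_BG[OF subsetD[OF G_carr S1] subsetD[OF G_carr H2G]]
      using iact_compose[OF G_ta[OF S1] G_ta[OF H2G] z] by simp
    finally show "compose (iwords d) f1 f2 (conc (pref w (n2 + n1)) z) = conc (u1 @ h1 r) (iact h' z)" .
  qed
  then show "\<exists>n u h. h \<in> H \<and> u \<in> fwords d \<and>
      (\<forall>z\<in>iwords d. compose (iwords d) f1 f2 (conc (pref w n) z) = conc u (iact h z))"
    using h'H u' by blast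
qed

lemma loc_inv:
  assumes f: "f \<in> Bij (iwords d)" "loc d H f"
  shows "loc d H (\<lambda>x\<in>iwords d. inv_into (iwords d) f x)"
  unfolding loc_def
proof
  fix w assume w: "w \<in> iwords d"
  have bij: "bij_betw f (iwords d) (iwords d)" using f(1) by (simp add: Bij_def)
  define w0 where "w0 = inv_into (iwords d) f w"
  have w0: "w0 \<in> iwords d" "f w0 = w"
    using bij w unfolding w0_def by (auto simp: bij_betw_def inv_into_into f_inv_into_f)
  obtain n u h where h: "h \<in> H" "u \<in> fwords d"
    and e: "\<forall>z\<in>iwords d. f (conc (pref w0 n) z) = conc u (iact h z)"
    using f(2) w0(1) unfolding loc_def by blast
  have hG: "h \<in> G" using h HG by blast
  have "w = conc u (iact h (sh n w0))"
    using e sh_iwords[OF w0(1)] conc_pref_sh[of w0 n] w0(2) by metis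
  then have pw: "pref w (length u) = u" by (simp add: pref_conc_self)
  have "\<forall>z\<in>iwords d. (\<lambda>x\<in>iwords d. inv_into (iwords d) f x) (conc (pref w (length u)) z)
      = conc (pref w0 n) (iact (inv\<^bsub>BG\<^esub> h) z)"
  proof
    fix z assume z: "z \<in> iwords d"
    define x where "x = conc (pref w0 n) (iact (inv\<^bsub>BG\<^esub> h) z)"
    have x: "x \<in> iwords d" unfolding x_def
      using conc_iwords[OF pref_fwords[OF w0(1)] iact_iwords[OF G_ta[OF G_inv[OF hG]] z]] .
    have "f x = conc u z" unfolding x_def using e iact_iwords[OF G_ta[OF G_inv[OF hG]] z] iact_inv2[OF hG z] by simp
    then have "inv_into (iwords d) f (conc u z) = x"
      using bij x by (metis bij_betw_def inv_into_f_f)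
    then show "(\<lambda>x\<in>iwords d. inv_into (iwords d) f x) (conc (pref w (length u)) z)
      = conc (pref w0 n) (iact (inv\<^bsub>BG\<^esub> h) z)"
      using pw conc_iwords[OF h(2) z] unfolding x_def by simp
  qed
  moreover have "inv\<^bsub>BG\<^esub> h \<in> H" using subgroup.m_inv_closed[OF Hsub h(1)] .
  ultimately show "\<exists>n u h. h \<in> H \<and> u \<in> fwords d \<and>
      (\<forall>z\<in>iwords d. (\<lambda>x\<in>iwords d. inv_into (iwords d) f x) (conc (pref w n) z) = conc u (iact h z))"
    using pref_fwords[OF w0(1)] by blast
qed

lemma loc_one: "loc d H (\<lambda>x\<in>iwords d. x)"
  unfolding loc_def
proof
  fix w assume w: "w \<in> iwords d"
  have "\<forall>z\<in>iwords d. (\<lambda>x\<in>iwords d. x) (conc (pref w 0) z) = conc [] (iact \<one>\<^bsub>BG\<^esub> z)"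
    using iact_id one_BG by (simp add: pref_def)
  then show "\<exists>n u h. h \<in> H \<and> u \<in> fwords d \<and>
      (\<forall>z\<in>iwords d. (\<lambda>x\<in>iwords d. x) (conc (pref w n) z) = conc u (iact h z))"
    using subgroup.one_closed[OF Hsub] fwords_Nil by blast
qed

definition "LL = {f \<in> Bij (iwords d). loc d H f}"

lemma LL_sub: "subgroup LL BI"
proof (rule group.subgroupI[OF group_BijGroup])
  show "LL \<subseteq> carrier BI" unfolding LL_def by (auto simp: BijGroup_def)
  show "LL \<noteq> {}" unfolding LL_def using loc_one id_Bij by blast
  fix a assume a: "a \<in> LL"
  then have a1: "a \<in> Bij (iwords d)" "loc d H a" unfolding LL_def by auto
  show "inv\<^bsub>BI\<^esub> a \<in> LL"
    unfolding LL_def inv_BijGroup[OF a1(1)] using restrict_inv_into_Bij[OF a1(1)] loc_inv[OF a1] by blast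
next
  fix a b assume "a \<in> LL" "b \<in> LL"
  then show "a \<otimes>\<^bsub>BI\<^esub> b \<in> LL"
    unfolding LL_def using compose_Bij loc_compose by (auto simp: BijGroup_def)
qed

end

lemma loc_mono: "H \<subseteq> H' \<Longrightarrow> loc d H f \<Longrightarrow> loc d H' f"
  unfolding loc_def by blast

lemma pref_Suc: "pref w (Suc n) = pref w n @ [w n]"
  by (simp add: pref_def)

lemma leaf_exists:
  assumes T: "complete_subtree d T" and w: "w \<in> iwords d"
  shows "\<exists>u\<in>leaves d T. pref w (length u) = u"
proof -
  define N where "N = {n. pref w n \<in> T}"
  have fin: "finite N"
  proof (rule finite_subset)
    show "N \<subseteq> length ` T" unfolding N_def by (auto intro: image_eqI[where x = "pref w _"])
    show "finite (length ` T)" using T by (simp add: complete_subtree_def)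
  qed
  have "0 \<in> N" using T by (simp add: N_def pref_def complete_subtree_def)
  define n where "n = Max N"
  have nN: "n \<in> N" unfolding n_def using fin \<open>0 \<in> N\<close> Max_in by blast
  have "Suc n \<notin> N"
  proof
    assume "Suc n \<in> N"
    from Max_ge[OF fin this] show False unfolding n_def by simp
  qed
  then have nc: "pref w n @ [w n] \<notin> T" by (simp add: N_def pref_Suc)
  have wn: "w n < d" using w by (simp add: iwords_def)
  have inT: "pref w n \<in> T" using nN by (simp add: N_def)
  then have "\<forall>i<d. pref w n @ [i] \<notin> T" using T nc wn unfolding complete_subtree_def by blast
  then have "pref w n \<in> leaves d T" using inT by (simp add: leaves_def)
  then show ?thesis by force
qed

lemma leaf_unique_aux:
  assumes T: "complete_subtree d T" and w: "w \<in> iwords d"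
    and u: "u \<in> leaves d T" "pref w (length u) = u"
    and u': "u' \<in> leaves d T" "pref w (length u') = u'"
    and lt: "length u < length u'"
  shows False
proof -
  have "pref w (length u') = pref w (Suc (length u)) @ pref (sh (Suc (length u)) w) (length u' - Suc (length u))"
  proof -
    have e: "Suc (length u) + (length u' - Suc (length u)) = length u'" using lt by simp
    show ?thesis using pref_add[of w "Suc (length u)" "length u' - Suc (length u)", unfolded e] .
  qed
  then have "u' = (u @ [w (length u)]) @ pref (sh (Suc (length u)) w) (length u' - Suc (length u))"
    using u u' pref_Suc by metis
  moreover have "u' \<in> T" using u' by (simp add: leaves_def)
  moreover have "\<forall>a b. a @ b \<in> T \<longrightarrow> a \<in> T" using T by (simp add: complete_subtree_def)
  ultimately have "u @ [w (length u)] \<in> T" by metis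
  moreover have "w (length u) < d" using w by (simp add: iwords_def)
  ultimately show False using u unfolding leaves_def by blast
qed

lemma leaf_unique:
  assumes T: "complete_subtree d T" and w: "w \<in> iwords d"
    and u: "u \<in> leaves d T" "pref w (length u) = u"
    and u': "u' \<in> leaves d T" "pref w (length u') = u'"
  shows "u = u'"
proof -
  consider "length u < length u'" | "length u' < length u" | "length u = length u'" by linarith
  then show ?thesis
  proof cases
    case 1 then show ?thesis using leaf_unique_aux[OF T w u u'] by blast
  next
    case 2 then show ?thesis using leaf_unique_aux[OF T w u' u] by blast
  next
    case 3 then show ?thesis using u u' by metis
  qed
qed

lemma lexless_eq: "lexless = (<)"
  by (auto simp: fun_eq_iff lexless_def list_less_def)

lemma leaf_list_props:
  assumes T: "complete_subtree d T"
  shows "set (leaf_list d T) = leaves d T" "distinct (leaf_list d T)"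
proof -
  have fin: "finite (leaves d T)" using T unfolding complete_subtree_def leaves_def by auto
  have ex: "\<exists>!L. sorted_wrt (<) L \<and> set L = leaves d T"
    using ex1_sorted_list_for_set_if_finite[OF fin] .
  have "set (leaf_list d T) = leaves d T \<and> sorted_wrt (<) (leaf_list d T)"
    unfolding leaf_list_def lexless_eq using theI'[OF ex] by (smt (verit, ccfv_threshold) ex the_equality)
  then show "set (leaf_list d T) = leaves d T" "distinct (leaf_list d T)"
    by (auto simp: strict_sorted_iff)
qed

lemma leaves_fw: "complete_subtree d T \<Longrightarrow> u \<in> leaves d T \<Longrightarrow> u \<in> fwords d"
  unfolding complete_subtree_def leaves_def by blast

lemma decomp:
  assumes T: "complete_subtree d T" and w: "w \<in> iwords d"
  shows "\<exists>i<length (leaf_list d T). pref w (length (leaf_list d T ! i)) = leaf_list d T ! i"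
  using leaf_exists[OF T w] leaf_list_props(1)[OF T] by (metis in_set_conv_nth)

context setting
begin

lemma V_facts:
  assumes fs: "finite_state d G" and f: "f \<in> Vgroup d G"
  shows "f \<in> Bij (iwords d)"
    "\<exists>F. finite F \<and> F \<subseteq> G \<and> (\<forall>t\<in>F. \<forall>i<d. section1 d t i \<in> F) \<and> loc d F f"
proof -
  obtain Tm Tp \<sigma> gs where Tm: "complete_subtree d Tm" and Tp: "complete_subtree d Tp"
    and len: "length (leaf_list d Tm) = length (leaf_list d Tp)"
    and sig: "bij_betw \<sigma> {..<length (leaf_list d Tp)} {..<length (leaf_list d Tp)}"
    and gs: "\<forall>i<length (leaf_list d Tp). gs i \<in> G"
    and ext: "f \<in> extensional (iwords d)"
    and eq: "\<forall>i<length (leaf_list d Tp). \<forall>w\<in>iwords d.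
            f (conc (leaf_list d Tp ! i) w) = conc (leaf_list d Tm ! \<sigma> i) (iact (gs i) w)"
    using f unfolding Vgroup_def is_V_elem_def by blast
  define Lp where "Lp = leaf_list d Tp"
  define Lm where "Lm = leaf_list d Tm"
  define N where "N = length Lp"
  note defs = Lp_def[symmetric] Lm_def[symmetric] N_def[symmetric]
  have lenm: "length Lm = N" using len unfolding defs by simp
  have sigN: "i < N \<Longrightarrow> \<sigma> i < N" for i using sig unfolding defs bij_betw_def by auto
  have Lmfw: "j < N \<Longrightarrow> Lm ! j \<in> fwords d" for j
    using leaves_fw[OF Tm] leaf_list_props(1)[OF Tm] lenm unfolding defs by (metis nth_mem)
  have Lmleaf: "j < N \<Longrightarrow> Lm ! j \<in> leaves d Tm" for j
    using leaf_list_props(1)[OF Tm] lenm unfolding defs by (metis nth_mem)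
  have Lpfw: "i < N \<Longrightarrow> Lp ! i \<in> fwords d" for i
  proof -
    assume "i < N"
    then have "Lp ! i \<in> set Lp" unfolding N_def by simp
    then show ?thesis using leaves_fw[OF Tp] leaf_list_props(1)[OF Tp] unfolding Lp_def by blast
  qed
  have dec: "\<And>w. w \<in> iwords d \<Longrightarrow> \<exists>i<N. pref w (length (Lp ! i)) = Lp ! i"
    using decomp[OF Tp] unfolding defs by blast
  have eq': "\<And>i w. i < N \<Longrightarrow> w \<in> iwords d \<Longrightarrow> f (conc (Lp ! i) w) = conc (Lm ! \<sigma> i) (iact (gs i) w)"
    using eq unfolding defs by blast
  have gs': "\<And>i. i < N \<Longrightarrow> gs i \<in> G" using gs unfolding defs by blast
  define F where "F = (\<Union>i<N. states d (gs i))"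
  have "finite F" unfolding F_def using fs gs' by (auto simp: finite_state_def)
  moreover have "F \<subseteq> G" unfolding F_def using ss gs' by (auto simp: self_similar_def)
  moreover have "\<forall>t\<in>F. \<forall>i<d. section1 d t i \<in> F" unfolding F_def using states.step by blast
  moreover have "loc d F f" unfolding loc_def
  proof
    fix w assume w: "w \<in> iwords d"
    obtain i where i: "i < N" "pref w (length (Lp ! i)) = Lp ! i" using dec[OF w] by blast
    have "gs i \<in> F" unfolding F_def using i states.self by blast
    moreover have "\<forall>z\<in>iwords d. f (conc (pref w (length (Lp ! i))) z) = conc (Lm ! \<sigma> i) (iact (gs i) z)"
      using eq' i by simp
    ultimately show "\<exists>n u h. h \<in> F \<and> u \<in> fwords d \<and>
        (\<forall>z\<in>iwords d. f (conc (pref w n) z) = conc u (iact h z))"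
      using Lmfw sigN i by blast
  qed
  ultimately show "\<exists>F. finite F \<and> F \<subseteq> G \<and> (\<forall>t\<in>F. \<forall>i<d. section1 d t i \<in> F) \<and> loc d F f"
    by blast
  have img: "w \<in> iwords d \<Longrightarrow> \<exists>i<N. w = conc (Lp ! i) (sh (length (Lp ! i)) w)" for w
    using dec conc_pref_sh by metis
  have into: "f w \<in> iwords d" if w: "w \<in> iwords d" for w
  proof -
    obtain i where i: "i < N" "w = conc (Lp ! i) (sh (length (Lp ! i)) w)" using img[OF w] by blast
    have "f w = conc (Lm ! \<sigma> i) (iact (gs i) (sh (length (Lp ! i)) w))"
      using eq'[OF i(1) sh_iwords[OF w], of "length (Lp ! i)"] i(2) by metis
    then show ?thesis using conc_iwords[OF Lmfw[OF sigN[OF i(1)]] iact_iwords[OF G_ta[OF gs'[OF i(1)]] sh_iwords[OF w]]]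
      by simp
  qed
  have inj: "inj_on f (iwords d)"
  proof (rule inj_onI)
    fix w1 w2 assume w1: "w1 \<in> iwords d" and w2: "w2 \<in> iwords d" and e: "f w1 = f w2"
    obtain i where i: "i < N" "w1 = conc (Lp ! i) (sh (length (Lp ! i)) w1)" using img[OF w1] by blast
    obtain j where j: "j < N" "w2 = conc (Lp ! j) (sh (length (Lp ! j)) w2)" using img[OF w2] by blast
    define z1 where "z1 = sh (length (Lp ! i)) w1"
    define z2 where "z2 = sh (length (Lp ! j)) w2"
    have z1: "z1 \<in> iwords d" and z2: "z2 \<in> iwords d" unfolding z1_def z2_def using sh_iwords w1 w2 by auto
    have f1: "f w1 = conc (Lm ! \<sigma> i) (iact (gs i) z1)" using eq'[OF i(1) z1] i(2) z1_def by simp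
    have f2: "f w2 = conc (Lm ! \<sigma> j) (iact (gs j) z2)" using eq'[OF j(1) z2] j(2) z2_def by simp
    have fi: "f w1 \<in> iwords d" using into[OF w1] .
    have "Lm ! \<sigma> i = Lm ! \<sigma> j"
      using leaf_unique[OF Tm fi Lmleaf[OF sigN[OF i(1)]] _ Lmleaf[OF sigN[OF j(1)]]]
        f1 f2 e pref_conc_self by metis
    then have "\<sigma> i = \<sigma> j"
      using leaf_list_props(2)[OF Tm] sigN i(1) j(1) lenm unfolding defs by (simp add: nth_eq_iff_index_eq)
    then have ij: "i = j" using sig i(1) j(1) unfolding defs bij_betw_def inj_on_def by blast
    then have "iact (gs i) z1 = iact (gs i) z2" using f1 f2 e conc_inj by metis
    then have "z1 = z2" using iact_inv1[OF gs'[OF i(1)] z1] iact_inv1[OF gs'[OF i(1)] z2] by metis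
    then show "w1 = w2" using i(2) j(2) ij unfolding z1_def z2_def by metis
  qed
  have onto: "iwords d \<subseteq> f ` iwords d"
  proof
    fix y assume y: "y \<in> iwords d"
    obtain j where j: "j < N" "pref y (length (Lm ! j)) = Lm ! j"
      using decomp[OF Tm y] lenm unfolding defs by metis
    obtain i where i: "i < N" "\<sigma> i = j" using sig j(1) unfolding defs bij_betw_def by (metis imageE lessThan_iff)
    define y' where "y' = sh (length (Lm ! j)) y"
    have y': "y' \<in> iwords d" unfolding y'_def using sh_iwords[OF y] .
    define x where "x = conc (Lp ! i) (iact (inv\<^bsub>BG\<^esub> (gs i)) y')"
    have iy: "iact (inv\<^bsub>BG\<^esub> (gs i)) y' \<in> iwords d" using iact_iwords[OF G_ta[OF G_inv[OF gs'[OF i(1)]]] y'] .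
    have x: "x \<in> iwords d" unfolding x_def using conc_iwords[OF Lpfw[OF i(1)] iy] .
    have "f x = conc (Lm ! j) (iact (gs i) (iact (inv\<^bsub>BG\<^esub> (gs i)) y'))"
      unfolding x_def using eq'[OF i(1) iy] i(2) by simp
    also have "\<dots> = conc (Lm ! j) y'" using iact_inv2[OF gs'[OF i(1)] y'] by simp
    also have "\<dots> = y" unfolding y'_def using conc_pref_sh[of y "length (Lm ! j)"] j(2) by simp
    finally show "y \<in> f ` iwords d" using x by (metis imageI)
  qed
  have "bij_betw f (iwords d) (iwords d)"
    unfolding bij_betw_def using inj into onto by blast
  then show "f \<in> Bij (iwords d)" using ext by (simp add: Bij_def)
qed

lemma secw_rep: "g \<in> G \<Longrightarrow> x < d \<Longrightarrow> section1 d g x = g \<Longrightarrow> secw d g (replicate n x) = g"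
proof (induction n)
  case 0 then show ?case using secw_Nil[OF G_ext] by simp
next
  case (Suc n)
  have r: "replicate n x \<in> fwords d" using Suc.prems(2) by (auto simp: fwords_def set_replicate_conv_if)
  have "secw d g (replicate (Suc n) x) = secw d g (replicate n x @ [x])"
    by (simp add: replicate_append_same)
  also have "\<dots> = section1 d (secw d g (replicate n x)) x" using secw_snoc[OF r Suc.prems(2)] .
  finally show ?case using Suc by simp
qed

lemma match_aux:
  assumes g: "g \<in> G" and h: "h \<in> G" and a: "a \<in> fwords d" and u: "u \<in> fwords d"
    and e: "\<forall>z\<in>iwords d. conc a (iact g z) = conc u (iact h z)"
    and lt: "length a < length u"
  shows False
proof -
  define c where "c = u ! length a"
  define c' where "c' = (if c = 0 then 1 else (0::nat))"
  have c': "c' < d" "c' \<noteq> c" unfolding c'_def using d2 by auto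
  define y where "y = (\<lambda>_::nat. c')"
  have y: "y \<in> iwords d" unfolding y_def iwords_def using c' by simp
  define z where "z = iact (inv\<^bsub>BG\<^esub> g) y"
  have z: "z \<in> iwords d" unfolding z_def using iact_iwords[OF G_ta[OF G_inv[OF g]] y] .
  have "conc a (iact g z) (length a) = c'" unfolding z_def using iact_inv2[OF g y] by (simp add: conc_def y_def)
  moreover have "conc u (iact h z) (length a) = c" unfolding c_def using lt by (simp add: conc_def)
  ultimately show False using e z c' by metis
qed

lemma match:
  assumes g: "g \<in> G" and h: "h \<in> G" and a: "a \<in> fwords d" and u: "u \<in> fwords d"
    and e: "\<forall>z\<in>iwords d. conc a (iact g z) = conc u (iact h z)"
  shows "g = h"
proof -
  have e': "\<forall>z\<in>iwords d. conc u (iact h z) = conc a (iact g z)" using e by metis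
  have l: "length a = length u"
    using match_aux[OF g h a u e] match_aux[OF h g u a e'] by (meson linorder_neqE_nat)
  define z0 where "z0 = (\<lambda>_::nat. 0::nat)"
  have z0: "z0 \<in> iwords d" unfolding z0_def iwords_def using d2 by simp
  have au: "a = u" using e z0 l pref_conc_self by metis
  have ii: "iact g z = iact h z" if z: "z \<in> iwords d" for z using e z au conc_inj by metis
  show ?thesis
  proof (rule ext)
    fix v
    show "g v = h v"
    proof (cases "v \<in> fwords d")
      case False then show ?thesis using G_ext[OF g] G_ext[OF h] by (simp add: extensional_def)
    next
      case True
      have cz: "conc v z0 \<in> iwords d" using conc_iwords[OF True z0] .
      have "g v = pref (iact g (conc v z0)) (length v)"
        using pref_iact[OF G_ta[OF g] cz] pref_conc_self by metis
      also have "\<dots> = pref (iact h (conc v z0)) (length v)" using ii[OF cz] by simp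
      also have "\<dots> = h v" using pref_iact[OF G_ta[OF h] cz] pref_conc_self by metis
      finally show ?thesis .
    qed
  qed
qed

lemma triv_V: "g \<in> G \<Longrightarrow> (\<lambda>w\<in>iwords d. iact g w) \<in> Vgroup d G"
proof -
  assume g: "g \<in> G"
  have T: "complete_subtree d {[]}" unfolding complete_subtree_def by simp
  have lv: "leaves d {[]} = {[]}" by (auto simp: leaves_def)
  define L where "L = leaf_list d {[]}"
  have sL: "set L = {[]}" "distinct L" using leaf_list_props[OF T] lv unfolding L_def by auto
  have "length L = 1" using distinct_card[OF sL(2)] sL(1) by simp
  then obtain x where "L = [x]" by (metis One_nat_def length_0_conv length_Suc_conv)
  then have L1: "leaf_list d {[]} = [[]]" using sL(1) unfolding L_def by simp
  show ?thesis
    unfolding Vgroup_def is_V_elem_def mem_Collect_eq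
    apply (rule exI[of _ "{[]}"], rule exI[of _ "{[]}"], rule exI[of _ id], rule exI[of _ "\<lambda>_. g"])
    using T g by (simp add: L1)
qed

lemma main:
  assumes per: "persistent d G" and fs: "finite_state d G" and fg: "fin_gen (iwords d) (Vgroup d G)"
  shows "fin_gen (fwords d) G"
proof -
  obtain S where S: "finite S" "S \<subseteq> Vgroup d G" "generate (BijGroup (iwords d)) S = Vgroup d G"
    using fg unfolding fin_gen_def by blast
  have "\<forall>s\<in>S. \<exists>F. finite F \<and> F \<subseteq> G \<and> (\<forall>t\<in>F. \<forall>i<d. section1 d t i \<in> F) \<and> loc d F s"
    using V_facts(2)[OF fs] S(2) by blast
  then obtain Fs where Fs: "\<forall>s\<in>S. finite (Fs s) \<and> Fs s \<subseteq> G \<and> (\<forall>t\<in>Fs s. \<forall>i<d. section1 d t i \<in> Fs s) \<and> loc d (Fs s) s"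
    by metis
  define F where "F = \<Union>(Fs ` S)"
  have Ffin: "finite F" unfolding F_def using Fs S(1) by blast
  have FG: "F \<subseteq> G" unfolding F_def using Fs by blast
  have Fsec: "\<forall>t\<in>F. \<forall>i<d. section1 d t i \<in> F" unfolding F_def using Fs by blast
  define K where "K = generate BG F"
  have KsubG: "K \<subseteq> G" unfolding K_def using KG[OF FG] .
  interpret H: setH d G K
    apply (rule setH.intro[OF setting_axioms], rule setH_axioms.intro)
    using KsubG K_sub[OF FG] K_secw[OF FG Fsec] unfolding K_def by auto
  have SL: "S \<subseteq> H.LL"
  proof
    fix s assume s: "s \<in> S"
    have "Fs s \<subseteq> F" unfolding F_def using s by blast
    then have "Fs s \<subseteq> K" unfolding K_def using generate.incl[of _ F BG] by blast
    moreover have "loc d (Fs s) s" using Fs s by blast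
    ultimately have "loc d K s" by (rule loc_mono)
    then show "s \<in> H.LL" unfolding H.LL_def using V_facts(1)[OF fs] S(2) s by blast
  qed
  have VL: "Vgroup d G \<subseteq> H.LL"
    using group.generate_subgroup_incl[OF group_BijGroup SL H.LL_sub] S(3) by simp
  obtain x where x: "x < d" "\<forall>g\<in>G. section1 d g x = g" using per unfolding persistent_def by blast
  have GK: "G \<subseteq> K"
  proof
    fix g assume g: "g \<in> G"
    have "loc d K (\<lambda>w\<in>iwords d. iact g w)" using VL triv_V[OF g] unfolding H.LL_def by blast
    moreover define w where "w = (\<lambda>_::nat. x)"
    moreover have w: "w \<in> iwords d" unfolding w_def iwords_def using x by simp
    ultimately obtain n u h where h: "h \<in> K" "u \<in> fwords d"
      and e: "\<forall>z\<in>iwords d. (\<lambda>w\<in>iwords d. iact g w) (conc (pref w n) z) = conc u (iact h z)"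
      unfolding loc_def by blast
    have pw: "pref w n = replicate n x" unfolding w_def pref_def by (simp add: map_replicate_const)
    have pf: "pref w n \<in> fwords d" using pref_fwords[OF w] .
    have "\<forall>z\<in>iwords d. conc (g (pref w n)) (iact g z) = conc u (iact h z)"
    proof
      fix z assume z: "z \<in> iwords d"
      have "conc (g (pref w n)) (iact g z) = iact g (conc (pref w n) z)"
        using iact_conc[OF G_ta[OF g] pf z] secw_rep[OF g x(1)] x(2) g pw by simp
      also have "\<dots> = conc u (iact h z)" using bspec[OF e z] conc_iwords[OF pf z] by simp
      finally show "conc (g (pref w n)) (iact g z) = conc u (iact h z)" .
    qed
    then have "g = h" using match[OF g _ ta_fw[OF G_ta[OF g] pf] h(2)] h(1) KsubG by blast
    then show "g \<in> K" using h by simp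
  qed
  have "generate BG F = G" using GK KsubG unfolding K_def by blast
  then show ?thesis unfolding fin_gen_def using Ffin FG by blast
qed

end

theorem lemma5p7:
  fixes d :: nat and G :: "(nat list \<Rightarrow> nat list) set"
  assumes "d \<ge> 2"
    and "subgroup G (BijGroup (fwords d))"
    and "\<forall>g\<in>G. tree_aut d g"
    and "persistent d G" and "finite_state d G" and "self_similar d G"
    and "fin_gen (iwords d) (Vgroup d G)"
  shows "fin_gen (fwords d) G"
proof -
  interpret setting d G using assms by (intro setting.intro) auto
  show ?thesis using main assms by blast
qed

end
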